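(* Let $H$ be a propositional formula in conjunctive normal form (a finite set of clauses) over the finite set of variables $\mathrm{Vars}(H)$. Then $H$ is unsatisfiable if and only if $H$ has a Stable Set of Assignments (SSA), i.e., there exist a set $P$ of (full) assignments to $\mathrm{Vars}(H)$, an assignment $\vec{p}_{init} \in P$, and an AC-mapping $\Phi: P \to H$ such that for every $\vec{p} \in P$, $\mathrm{Nbhd}(\vec{p}_{init},\vec{p},\Phi(\vec{p})) \subseteq P$.
   Context: A clause is a disjunction of literals; a CNF formula $H$ is identified with its set of clauses $\{C_1,\dots,C_k\}$ and $\mathrm{Vars}(H)$ denotes its set of variables. Assignments are full assignments to $\mathrm{Vars}(H)$. For an assignment $\vec{p}$ falsifying a clause $C$, $\mathrm{Nbhd}(\vec{p},C)$ is the set of assignments that satisfy $C$ and are at Hamming distance 1 from $\vec{p}$ (equivalently, obtained from $\vec{p}$ by flipping the value of one variable of $C$). For another assignment $\vec{q}$, $\mathrm{Nbhd}(\vec{q},\vec{p},C)$ is the subset of $\mathrm{Nbhd}(\vec{p},C)$ consisting of those assignments whose Hamming distance to $\vec{q}$ is strictly greater than that of $\vec{p}$. An AC-mapping for a set $P$ of assignments each of which falsifies $H$ is a map $\Phi$ assigning to each $\vec{p}\in P$ a clause $\Phi(\vec{p})$ of $H$ falsified by $\vec{p}$ (so in particular every assignment in an SSA falsifies $H$). The assignment $\vec{p}_{init}$ is called the center of the SSA. *)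

theory Defs
  imports Main
begin

text \<open>A literal is a pair (variable, polarity): (v, True) is v, (v, False) is the negation of v.
 A clause is a set of literals, a CNF formula is a set of clauses.\<close>

type_synonym 'v lit = "'v \<times> bool"
type_synonym 'v clause = "'v lit set"
type_synonym 'v cnf = "'v clause set"
type_synonym 'v assignment = "'v \<Rightarrow> bool"

definition is_cnf :: "'v cnf \<Rightarrow> bool" where
  "is_cnf H \<longleftrightarrow> finite H \<and> (\<forall>C\<in>H. finite C)"

definition Vars :: "'v cnf \<Rightarrow> 'v set" where
  "Vars H = fst ` (\<Union>H)"

definition lit_sat :: "'v assignment \<Rightarrow> 'v lit \<Rightarrow> bool" where
  "lit_sat p l \<longleftrightarrow> p (fst l) = snd l"

definition clause_sat :: "'v assignment \<Rightarrow> 'v clause \<Rightarrow> bool" where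
  "clause_sat p C \<longleftrightarrow> (\<exists>l\<in>C. lit_sat p l)"

definition cnf_sat :: "'v assignment \<Rightarrow> 'v cnf \<Rightarrow> bool" where
  "cnf_sat p H \<longleftrightarrow> (\<forall>C\<in>H. clause_sat p C)"

text \<open>Full assignments to Vars(H), represented canonically as functions that are
 False outside Vars(H).\<close>
definition is_assignment :: "'v cnf \<Rightarrow> 'v assignment \<Rightarrow> bool" where
  "is_assignment H p \<longleftrightarrow> (\<forall>v. v \<notin> Vars H \<longrightarrow> p v = False)"

definition satisfiable :: "'v cnf \<Rightarrow> bool" where
  "satisfiable H \<longleftrightarrow> (\<exists>p. is_assignment H p \<and> cnf_sat p H)"

definition hamming :: "'v cnf \<Rightarrow> 'v assignment \<Rightarrow> 'v assignment \<Rightarrow> nat" where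
  "hamming H p q = card {v \<in> Vars H. p v \<noteq> q v}"

definition Nbhd :: "'v cnf \<Rightarrow> 'v assignment \<Rightarrow> 'v clause \<Rightarrow> 'v assignment set" where
  "Nbhd H p C = {r. is_assignment H r \<and> clause_sat r C \<and> hamming H p r = 1}"

definition Nbhd_rel :: "'v cnf \<Rightarrow> 'v assignment \<Rightarrow> 'v assignment \<Rightarrow> 'v clause \<Rightarrow> 'v assignment set" where
  "Nbhd_rel H q p C = {r \<in> Nbhd H p C. hamming H q r > hamming H q p}"

definition AC_mapping :: "'v cnf \<Rightarrow> 'v assignment set \<Rightarrow> ('v assignment \<Rightarrow> 'v clause) \<Rightarrow> bool" where
  "AC_mapping H P \<Phi> \<longleftrightarrow> (\<forall>p\<in>P. \<Phi> p \<in> H \<and> \<not> clause_sat p (\<Phi> p))"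

definition is_SSA :: "'v cnf \<Rightarrow> 'v assignment set \<Rightarrow> 'v assignment \<Rightarrow> ('v assignment \<Rightarrow> 'v clause) \<Rightarrow> bool" where
  "is_SSA H P p_init \<Phi> \<longleftrightarrow>
     (\<forall>p\<in>P. is_assignment H p) \<and> p_init \<in> P \<and> AC_mapping H P \<Phi> \<and>
     (\<forall>p\<in>P. Nbhd_rel H p_init p (\<Phi> p) \<subseteq> P)"

end

theory Submission
  imports Defs
begin

lemma ssa_imp_unsat:
  fixes H :: "'v cnf"
  assumes cnf: "is_cnf H" and ssa: "is_SSA H P p0 \<Phi>" and sa: "is_assignment H s" and ss: "cnf_sat s H"
  shows False
proof -
  have finV: "finite (Vars H)" using cnf unfolding is_cnf_def Vars_def by auto
  define Q where "Q = {p \<in> P. \<forall>v. p v = p0 v \<or> p v = s v}"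
  define d where "d p = card {v \<in> Vars H. p v \<noteq> s v}" for p :: "'v assignment"
  have "p0 \<in> Q" using ssa unfolding Q_def is_SSA_def by auto
  then obtain p where pQ: "p \<in> Q" and pmin: "\<And>q. q \<in> Q \<Longrightarrow> d p \<le> d q"
    using ex_has_least_nat[of "\<lambda>q. q \<in> Q" p0 d] by blast
  have pP: "p \<in> P" and pbet: "\<And>v. p v = p0 v \<or> p v = s v" using pQ unfolding Q_def by auto
  define C where "C = \<Phi> p"
  have CH: "C \<in> H" and pC: "\<not> clause_sat p C"
    using ssa pP unfolding is_SSA_def AC_mapping_def C_def by auto
  have "clause_sat s C" using ss CH unfolding cnf_sat_def by auto
  then obtain l where lC: "l \<in> C" and sl: "lit_sat s l" unfolding clause_sat_def by auto
  define v where "v = fst l"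
  have sv: "s v = snd l" using sl unfolding lit_sat_def v_def by auto
  have pv: "p v \<noteq> snd l" using pC lC unfolding clause_sat_def lit_sat_def v_def by auto
  have vV: "v \<in> Vars H" using lC CH unfolding Vars_def v_def by force
  have p0v: "p0 v \<noteq> s v" using pbet[of v] pv sv by auto
  define r where "r = p(v := s v)"
  have pa: "is_assignment H p" using ssa pP unfolding is_SSA_def by auto
  have ra: "is_assignment H r" using pa vV unfolding is_assignment_def r_def by auto
  have rC: "clause_sat r C" using lC sv unfolding clause_sat_def lit_sat_def r_def v_def by auto
  have "{w \<in> Vars H. p w \<noteq> r w} = {v}" using vV pv sv unfolding r_def by auto
  hence h1: "hamming H p r = 1" unfolding hamming_def by simp
  have e2: "{w \<in> Vars H. p0 w \<noteq> r w} = insert v {w \<in> Vars H. p0 w \<noteq> p w}"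
    using vV pv sv p0v pbet unfolding r_def by auto
  have "v \<notin> {w \<in> Vars H. p0 w \<noteq> p w}" using pv sv p0v pbet[of v] by auto
  hence h2: "hamming H p0 r > hamming H p0 p" unfolding hamming_def e2
    using finV by (simp add: card_insert_disjoint)
  have "r \<in> Nbhd_rel H p0 p (\<Phi> p)" using ra rC h1 h2 unfolding Nbhd_rel_def Nbhd_def C_def by auto
  hence rP: "r \<in> P" using ssa pP unfolding is_SSA_def by blast
  have rQ: "r \<in> Q" using rP pbet unfolding Q_def r_def by auto
  have e3: "{w \<in> Vars H. r w \<noteq> s w} = {w \<in> Vars H. p w \<noteq> s w} - {v}"
    unfolding r_def by auto
  have "v \<in> {w \<in> Vars H. p w \<noteq> s w}" using vV pv sv by auto
  hence "d r < d p" unfolding d_def e3 using finV by (intro card_Diff1_less) auto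
  thus False using pmin[OF rQ] by simp
qed

theorem proposition1:
  fixes H :: "'v cnf"
  assumes "is_cnf H"
  shows "\<not> satisfiable H \<longleftrightarrow> (\<exists>P p_init \<Phi>. is_SSA H P p_init \<Phi>)"
proof
  assume un: "\<not> satisfiable H"
  define P where "P = {p. is_assignment H p}"
  define \<Phi> where "\<Phi> p = (SOME C. C \<in> H \<and> \<not> clause_sat p C)" for p
  have "\<Phi> p \<in> H \<and> \<not> clause_sat p (\<Phi> p)" if "p \<in> P" for p
  proof -
    have "\<exists>C. C \<in> H \<and> \<not> clause_sat p C" using un that unfolding P_def satisfiable_def cnf_sat_def by auto
    thus ?thesis unfolding \<Phi>_def by (rule someI_ex)
  qed
  hence "is_SSA H P (\<lambda>_. False) \<Phi>"
    unfolding is_SSA_def AC_mapping_def Nbhd_rel_def Nbhd_def P_def is_assignment_def by auto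
  thus "\<exists>P p_init \<Phi>. is_SSA H P p_init \<Phi>" by blast
next
  assume "\<exists>P p_init \<Phi>. is_SSA H P p_init \<Phi>"
  then obtain P p0 \<Phi> where "is_SSA H P p0 \<Phi>" by blast
  thus "\<not> satisfiable H" using ssa_imp_unsat[OF assms] unfolding satisfiable_def by blast
qed

end
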